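(* Let $\ell\geq 1$ be an integer, $m=2\ell+1$, $u=(3^m+1)/2$ and $v=2\cdot 3^{\ell}+1$. Let $\pi$ be a generator of $\mathrm{GF}(3^m)^*$, and let $\mathcal{C}_{(u,v)}$ be the cyclic code of length $3^m-1$ over $\mathrm{GF}(3)$ with generator polynomial $m_u(x)m_v(x)$. Then $\pi^u$ and $\pi^v$ are not conjugate over $\mathrm{GF}(3)$, and $\mathcal{C}_{(u,v)}$ has parameters $[3^m-1,\,3^m-1-2m,\,4]$, i.e. it has dimension $3^m-1-2m$ and minimum Hamming distance exactly $4$. (In particular it is optimal: by the Sphere Packing bound no linear code over $\mathrm{GF}(3)$ of length $3^m-1$ and dimension $3^m-1-2m$ has minimum distance greater than $4$.)
   Context: $\mathrm{GF}(q)$ denotes the finite field with $q$ elements. For $0\le i\le 3^m-2$, $m_i(x)$ denotes the minimal polynomial of $\pi^i$ over $\mathrm{GF}(3)$. A cyclic code of length $n$ over $\mathrm{GF}(3)$ is identified with an ideal of $\mathrm{GF}(3)[x]/(x^n-1)$, and the code with generator polynomial $g(x)$ (a divisor of $x^n-1$) is the ideal $\langle g(x)\rangle$, i.e. the set of vectors $(c_0,\dots,c_{n-1})\in\mathrm{GF}(3)^n$ such that $g(x)$ divides $\sum_i c_ix^i$. Equivalently here, $\mathcal{C}_{(u,v)}=\{(c_0,\dots,c_{3^m-2})\in\mathrm{GF}(3)^{3^m-1}:\ \sum_i c_i\pi^{ui}=0,\ \sum_i c_i\pi^{vi}=0\}$. An $[n,k,d]$ code is a linear code of length $n$, dimension $k$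 and minimum Hamming distance $d$. *)

theory Defs
  imports Main
begin

definition prime_subfield :: "'a::field set" where
  "prime_subfield = range (of_nat :: nat \<Rightarrow> 'a)"

definition is_primitive :: "'a::field \<Rightarrow> bool" where
  "is_primitive p \<longleftrightarrow> p \<noteq> 0 \<and> (\<forall>x. x \<noteq> 0 \<longrightarrow> (\<exists>k::nat. x = p ^ k))"

text \<open>The cyclic code C_(u,v) of length n = 3^m - 1 with generator polynomial m_u(x) m_v(x),
  described by its zeros pi^u and pi^v.\<close>
definition cyclic_code_uv :: "nat \<Rightarrow> 'a::field \<Rightarrow> nat \<Rightarrow> nat \<Rightarrow> (nat \<Rightarrow> 'a) set" where
  "cyclic_code_uv n p u v =
     {c. (\<forall>i. c i \<in> prime_subfield) \<and> (\<forall>i\<ge>n. c i = 0) \<and>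
         (\<Sum>i<n. c i * p ^ (u * i)) = 0 \<and> (\<Sum>i<n. c i * p ^ (v * i)) = 0}"

definition hamming_dist :: "nat \<Rightarrow> (nat \<Rightarrow> 'a) \<Rightarrow> (nat \<Rightarrow> 'a) \<Rightarrow> nat" where
  "hamming_dist n c d = card {i. i < n \<and> c i \<noteq> d i}"

definition min_dist :: "nat \<Rightarrow> (nat \<Rightarrow> 'a) set \<Rightarrow> nat" where
  "min_dist n C = Min {hamming_dist n c d | c d. c \<in> C \<and> d \<in> C \<and> c \<noteq> d}"

definition conjugate_GF3 :: "'a::field \<Rightarrow> 'a \<Rightarrow> bool" where
  "conjugate_GF3 x y \<longleftrightarrow> (\<exists>j::nat. y = x ^ (3 ^ j))"

end

theory Submission
  imports Defs "HOL-Library.FuncSet" "HOL-Computational_Algebra.Polynomial"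
begin


locale gf3 =
  fixes p :: "'a::{field,finite}" and m :: nat
  assumes card_F: "card (UNIV :: 'a set) = 3 ^ m"
    and prim: "is_primitive p"
    and m_pos: "m \<ge> 1"
begin

abbreviation N :: nat where "N \<equiv> 3 ^ m - 1"

lemma three_zero: "(3::'a) = 0"
proof -
  have "(\<Sum>x\<in>(UNIV::'a set). x) = (\<Sum>x\<in>UNIV. x + 1)"
    by (rule sum.reindex_bij_witness[of _ "\<lambda>x. x + 1" "\<lambda>x. x - 1"]) auto
  also have "\<dots> = (\<Sum>x\<in>UNIV. x) + of_nat (card (UNIV::'a set))"
    by (simp add: sum.distrib)
  finally have "of_nat (3 ^ m) = (0::'a)" using card_F by simp
  hence "(of_nat 3 :: 'a) ^ m = 0" by (simp add: of_nat_power)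
  hence "(of_nat 3 :: 'a) = 0" by simp
  thus ?thesis by simp
qed

lemma two_eq: "(2::'a) = - 1"
  using three_zero by (simp add: eq_neg_iff_add_eq_0)

lemma of_nat_mod3: "(of_nat j :: 'a) = of_nat (j mod 3)"
proof -
  have "(of_nat j :: 'a) = of_nat (3 * (j div 3) + j mod 3)" by simp
  also have "\<dots> = of_nat (j mod 3)" using three_zero by (simp only: of_nat_add of_nat_mult) simp
  finally show ?thesis .
qed

lemma one_neq_neg1: "(1::'a) \<noteq> - 1"
proof
  assume "(1::'a) = -1"
  hence "(2::'a) = 0" by (simp add: eq_neg_iff_add_eq_0)
  with two_eq show False by simp
qed

lemma G_iff: "x \<in> prime_subfield \<longleftrightarrow> x = 0 \<or> x = 1 \<or> x = (-1::'a)"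
proof
  assume "x \<in> prime_subfield"
  then obtain j where j: "x = of_nat j" unfolding prime_subfield_def by auto
  have x: "x = of_nat (j mod 3)" using j of_nat_mod3[of j] by (rule trans)
  have "j mod 3 = 0 \<or> j mod 3 = 1 \<or> j mod 3 = 2" by auto
  thus "x = 0 \<or> x = 1 \<or> x = -1"
  proof (elim disjE)
    assume "j mod 3 = 2" thus ?thesis using x two_eq by simp
  qed (use x in simp)+
next
  assume "x = 0 \<or> x = 1 \<or> x = (-1::'a)"
  moreover have "(0::'a) \<in> prime_subfield" "(1::'a) \<in> prime_subfield" "(-1::'a) \<in> prime_subfield"
    unfolding prime_subfield_def
  proof -
    show "(0::'a) \<in> range of_nat" by (rule image_eqI[of _ _ 0]) auto
    show "(1::'a) \<in> range of_nat" by (rule image_eqI[of _ _ 1]) auto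
    show "(-1::'a) \<in> range of_nat" by (rule image_eqI[of _ _ 2]) (use two_eq in auto)
  qed
  ultimately show "x \<in> prime_subfield" by auto
qed

lemma G_eq: "prime_subfield = {0, 1, -1::'a}"
  using G_iff by auto

lemma card_G: "card (prime_subfield :: 'a set) = 3"
  using one_neq_neg1 by (simp add: G_eq)

lemma G_add: "x \<in> prime_subfield \<Longrightarrow> y \<in> prime_subfield \<Longrightarrow> x + y \<in> (prime_subfield :: 'a set)"
proof -
  have a: "(1::'a) + 1 = -1" using two_eq by (simp add: one_add_one)
  have b: "(-1::'a) + -1 = 1" using a by (metis minus_add_distrib minus_minus)
  assume "x \<in> prime_subfield" "y \<in> prime_subfield"
  thus ?thesis unfolding G_iff using a b by auto
qed

lemma G_neg: "x \<in> prime_subfield \<Longrightarrow> - x \<in> (prime_subfield :: 'a set)"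
  unfolding G_iff by auto

lemma G_mult: "x \<in> prime_subfield \<Longrightarrow> y \<in> prime_subfield \<Longrightarrow> x * y \<in> (prime_subfield :: 'a set)"
  unfolding G_iff by auto

lemma G_diff: "x \<in> prime_subfield \<Longrightarrow> y \<in> prime_subfield \<Longrightarrow> x - y \<in> (prime_subfield :: 'a set)"
  using G_add[of x "-y"] G_neg[of y] by simp

lemma G_zero: "(0::'a) \<in> prime_subfield" and G_one: "(1::'a) \<in> prime_subfield"
  and G_m1: "(-1::'a) \<in> prime_subfield"
  unfolding G_iff by auto

lemma card_nz: "card (UNIV - {0::'a}) = N"
  using card_F by (simp add: card_Diff_singleton)

lemma N_pos: "N \<ge> 2"
proof -
  have "(3::nat) ^ m \<ge> 3 ^ 1" using m_pos by (intro power_increasing) auto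
  thus ?thesis by simp
qed

lemma pow_N: assumes "x \<noteq> (0::'a)" shows "x ^ N = 1"
proof -
  let ?A = "UNIV - {0::'a}"
  have "prod id ?A = prod (\<lambda>y. x * y) ?A"
    by (rule prod.reindex_bij_witness[of _ "\<lambda>y. x * y" "\<lambda>y. y / x"]) (use assms in auto)
  also have "\<dots> = x ^ card ?A * prod id ?A" by (simp add: prod.distrib)
  finally have "prod id ?A = x ^ N * prod id ?A" using card_nz by simp
  moreover have "prod id ?A \<noteq> 0" by (simp add: prod_zero_iff)
  ultimately show ?thesis by simp
qed

lemma pow_q: "(x::'a) ^ (3 ^ m) = x"
proof (cases "x = 0")
  case True thus ?thesis using m_pos by simp
next
  case False
  have e: "(3::nat) ^ m = Suc N" using N_pos by simp
  show ?thesis by (subst e) (simp only: power_Suc pow_N[OF False] mult_1_right)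
qed

lemma p_nz: "p \<noteq> 0" using prim unfolding is_primitive_def by simp

lemma p_pow_N: "p ^ N = 1" using pow_N p_nz by simp

lemma p_pow_mod: "p ^ j = p ^ (j mod N)"
proof -
  have "p ^ j = p ^ (N * (j div N) + j mod N)" by simp
  also have "\<dots> = p ^ (j mod N)" by (simp only: power_add power_mult p_pow_N) simp
  finally show ?thesis .
qed

lemma p_order: assumes "0 < j" "j < N" shows "p ^ j \<noteq> 1"
proof
  assume pj: "p ^ j = 1"
  have "UNIV - {0} \<subseteq> (\<lambda>i. p ^ i) ` {..<j}"
  proof
    fix x assume "x \<in> UNIV - {0::'a}"
    then obtain i where "x = p ^ i" using prim unfolding is_primitive_def by auto
    also have "p ^ i = p ^ (j * (i div j) + i mod j)" by simp
    also have "\<dots> = p ^ (i mod j)" by (simp only: power_add power_mult pj) simp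
    finally show "x \<in> (\<lambda>i. p ^ i) ` {..<j}" using assms by auto
  qed
  hence "card (UNIV - {0::'a}) \<le> card ((\<lambda>i. p ^ i) ` {..<j})" by (intro card_mono) auto
  also have "\<dots> \<le> j" using card_image_le[of "{..<j}" "\<lambda>i. p ^ i"] by simp
  finally show False using card_nz assms by simp
qed

lemma p_pow_eq1: "p ^ j = 1 \<longleftrightarrow> N dvd j"
proof
  assume "p ^ j = 1"
  hence "p ^ (j mod N) = 1" using p_pow_mod by simp
  moreover have "j mod N < N" using N_pos by simp
  ultimately have "j mod N = 0" using p_order[of "j mod N"] by (cases "j mod N = 0") auto
  thus "N dvd j" by auto
next
  assume "N dvd j" then obtain c where "j = N * c" by auto
  thus "p ^ j = 1" by (metis power_mult power_one p_pow_N)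
qed

lemma p_pow_inj: assumes "a \<le> b" "p ^ a = p ^ b" shows "N dvd (b - a)"
proof -
  have "p ^ b = p ^ a * p ^ (b - a)" using assms(1) by (simp add: power_add[symmetric])
  hence "p ^ (b - a) = 1" using assms(2) p_nz by simp
  thus ?thesis using p_pow_eq1 by simp
qed

lemma frob3: "((x::'a) + y) ^ 3 = x ^ 3 + y ^ 3"
proof -
  have "(x + y) ^ 3 = x ^ 3 + 3 * (x^2 * y + x * y^2) + y ^ 3" by (simp add: algebra_simps power2_eq_square power3_eq_cube)
  thus ?thesis using three_zero by simp
qed

lemma frob_add: "((x::'a) + y) ^ (3 ^ j) = x ^ (3 ^ j) + y ^ (3 ^ j)"
proof (induction j)
  case 0 thus ?case by simp
next
  case (Suc j)
  have "(x + y) ^ (3 ^ Suc j) = ((x + y) ^ (3 ^ j)) ^ 3" by (simp add: power_mult[symmetric] mult.commute)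
  also have "\<dots> = (x ^ (3 ^ j)) ^ 3 + (y ^ (3 ^ j)) ^ 3" using Suc frob3 by simp
  finally show ?case by (simp add: power_mult[symmetric] mult.commute)
qed

lemma frob_neg: "(- (x::'a)) ^ (3 ^ j) = - (x ^ (3 ^ j))"
proof -
  have "odd ((3::nat) ^ j)" by simp
  thus ?thesis by (rule power_minus_odd)
qed

lemma frob_diff: "((x::'a) - y) ^ (3 ^ j) = x ^ (3 ^ j) - y ^ (3 ^ j)"
  using frob_add[of x "-y" j] frob_neg[of y j] by simp

lemma frob_sum: "(\<Sum>i\<in>A. f i :: 'a) ^ (3 ^ j) = (\<Sum>i\<in>A. f i ^ (3 ^ j))"
  by (induction A rule: infinite_finite_induct) (auto simp: frob_add)

lemma frob_inj: "(x::'a) ^ (3 ^ j) = y ^ (3 ^ j) \<Longrightarrow> x = y"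
  using frob_diff[of x y j] by simp

lemma G_frob: "(g::'a) \<in> prime_subfield \<Longrightarrow> g ^ (3 ^ j) = g"
  unfolding G_iff by (auto simp: frob_neg)

lemma frob_comp: "((x::'a) ^ (3 ^ a)) ^ (3 ^ b) = x ^ (3 ^ (a + b))"
  by (simp add: power_mult[symmetric] power_add)

lemma frob_mod: "(x::'a) ^ (3 ^ j) = x ^ (3 ^ (j mod m))"
proof -
  have "\<And>c. (x::'a) ^ (3 ^ (m * c)) = x"
  proof -
    fix c show "(x::'a) ^ (3 ^ (m * c)) = x"
    proof (induction c)
      case 0 thus ?case by simp
    next
      case (Suc c)
      have "x ^ (3 ^ (m * Suc c)) = (x ^ (3 ^ (m * c))) ^ (3 ^ m)"
        by (simp add: frob_comp add.commute)
      thus ?case using Suc pow_q by simp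
    qed
  qed
  have "x ^ (3 ^ j) = (x ^ (3 ^ (m * (j div m)))) ^ (3 ^ (j mod m))"
    by (simp add: frob_comp)
  thus ?thesis using \<open>\<And>c. x ^ (3 ^ (m * c)) = x\<close> by simp
qed

end

locale gf3l = gf3 p m for p :: "'a::{field,finite}" and m :: nat +
  fixes l :: nat
  assumes l_pos: "l \<ge> 1" and m_def: "m = 2 * l + 1"
begin

abbreviation L :: nat where "L \<equiv> 3 ^ l"
abbreviation K :: nat where "K \<equiv> N div 2"

lemma L_ge3: "L \<ge> 3"
proof -
  have "(3::nat) ^ l \<ge> 3 ^ 1" using l_pos by (intro power_increasing) auto
  thus ?thesis by simp
qed

lemma q_eq: "(3::nat) ^ m = 3 * (L * L)"
proof -
  have "(3::nat) ^ m = 3 * 3 ^ (l + l)" by (simp add: m_def mult_2)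
  also have "(3::nat) ^ (l + l) = L * L" by (rule power_add)
  finally show ?thesis .
qed

lemma N_eq: "N = 3 * (L * L) - 1" using q_eq by simp

lemma q_mod4: "(3::nat) ^ m mod 4 = 3"
proof -
  have "(3::nat) ^ l * 3 ^ l = 9 ^ l" by (simp add: power_mult_distrib[symmetric])
  hence "(3::nat) ^ m = 3 * 9 ^ l" using q_eq by simp
  moreover have "(9::nat) ^ l mod 4 = 1"
  proof -
    have "(9::nat) ^ l mod 4 = (9 mod 4) ^ l mod 4" by (rule power_mod[symmetric])
    thus ?thesis by simp
  qed
  moreover have "(3 * 9 ^ l) mod 4 = (3 * (9 ^ l mod 4)) mod (4::nat)" by (simp only: mod_mult_right_eq)
  ultimately show ?thesis by simp
qed

lemma K2: "2 * K = N" and K_odd: "odd K"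
proof -
  have a: "\<forall>Q::nat. Q mod 4 = 3 \<longrightarrow> 2 * ((Q - 1) div 2) = Q - 1 \<and> odd ((Q - 1) div 2)"
    by presburger
  show "2 * K = N" "odd K" using a[rule_format, OF q_mod4] by auto
qed

lemma K_pos: "0 < K" and K_less: "K < N" using K2 N_pos by auto

lemma eta_sq: "(x::'a) \<noteq> 0 \<Longrightarrow> x ^ K = 1 \<or> x ^ K = -1"
proof -
  assume "x \<noteq> 0"
  hence "(x ^ K) ^ 2 = 1" using pow_N[of x] K2 by (simp add: power_mult[symmetric] mult.commute)
  thus ?thesis by (simp add: power2_eq_1_iff)
qed

lemma neg1_K: "(-1::'a) ^ K = -1" using K_odd by simp

lemma p_K: "p ^ K = -1"
proof -
  have "p ^ K \<noteq> 1" using p_order K_pos K_less by simp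
  thus ?thesis using eta_sq[OF p_nz] by auto
qed

lemma u_eq: "(3 ^ m + 1) div 2 = K + 1"
proof -
  have g: "\<And>Q k::nat. 2 * k = Q - 1 \<Longrightarrow> 2 \<le> Q - 1 \<Longrightarrow> (Q + 1) div 2 = k + 1" by presburger
  show ?thesis by (rule g[OF K2 N_pos])
qed

lemma v_w: "(2 * L + 1) * (3 * (2 * L - 1)) = 4 * N + 1"
proof -
  have "(2 * L + 1) * (3 * (2 * L - 1)) = 3 * ((2 * L + 1) * (2 * L - 1))" by simp
  also have "(2 * L + 1) * (2 * L - 1) = 4 * (L * L) - 1" using L_ge3
    by (simp add: algebra_simps diff_mult_distrib2)
  finally show ?thesis using N_eq L_ge3 by simp
qed

lemma v_inv: "(x::'a) ^ ((2 * L + 1) * (3 * (2 * L - 1))) = x"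
proof (cases "x = 0")
  case True thus ?thesis using L_ge3 by simp
next
  case False
  have "x ^ (4 * N + 1) = x" by (simp only: power_add mult.commute[of 4] power_mult pow_N[OF False]) simp
  thus ?thesis using v_w by simp
qed

lemma key_nonconj: "p ^ (2 * L + 1) \<noteq> - (p ^ (3 ^ i))"
proof
  assume h: "p ^ (2 * L + 1) = - (p ^ (3 ^ i))"
  define j where "j = i mod m"
  have jm: "j < m" using m_pos unfolding j_def by simp
  have "p ^ (3 ^ i) = p ^ (3 ^ j)" unfolding j_def by (rule frob_mod)
  hence "p ^ (2 * L + 1) = p ^ (K + 3 ^ j)" using h p_K by (simp add: power_add)
  moreover have j_le: "(3::nat) ^ j \<le> L * L"
  proof -
    have "j \<le> 2 * l" using jm m_def by simp
    hence "(3::nat) ^ j \<le> 3 ^ (2 * l)" by (intro power_increasing) auto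
    thus ?thesis by (simp add: power_mult power2_eq_square[symmetric] mult.commute)
  qed
  have j_ge: "(1::nat) \<le> 3 ^ j" by simp
  have Q: "L * L \<ge> 3 * L" using L_ge3 by simp
  have le: "2 * L + 1 \<le> K + 3 ^ j" using K2 N_eq j_ge Q L_ge3 by linarith
  ultimately have "N dvd (K + 3 ^ j - (2 * L + 1))" by (intro p_pow_inj) auto
  moreover have "0 < K + 3 ^ j - (2 * L + 1)" using K2 N_eq j_ge Q L_ge3 by linarith
  moreover have "K + 3 ^ j - (2 * L + 1) < N" using K2 N_eq j_le Q L_ge3 by linarith
  ultimately show False using nat_dvd_not_less by blast
qed

end



context gf3l begin

lemma sig_sig_3: "(((x::'a) ^ L) ^ L) ^ 3 = x"
proof -
  have "(((x::'a) ^ L) ^ L) ^ 3 = x ^ (3 ^ l * 3 ^ l * 3)"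
    by (simp only: power_mult)
  also have "(3::nat) ^ l * 3 ^ l * 3 = 3 ^ m" using m_def by (simp add: power_add[symmetric] mult_2)
  finally show ?thesis using pow_q by simp
qed

lemma pow_sq_L: "((x::'a) ^ 2) ^ L = (x ^ L) ^ 2"
  by (simp only: power_mult[symmetric] mult.commute)

lemma pow_3_L: "((x::'a) ^ 3) ^ L = (x ^ L) ^ 3"
  by (simp only: power_mult[symmetric] mult.commute)

lemma v_split: "(x::'a) ^ (2 * L + 1) = x * (x ^ L) ^ 2"
  by (simp add: power_add power_mult[symmetric] mult.commute)

lemma Z_iter: assumes "(Z::'a) ^ 3 = Z + 1" shows "Z ^ (3 ^ k) = Z + of_nat k"
proof (induction k)
  case 0 thus ?case by simp
next
  case (Suc k)
  have "Z ^ (3 ^ Suc k) = (Z ^ (3 ^ k)) ^ 3" by (simp add: power_mult[symmetric] mult.commute)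
  also have "\<dots> = Z ^ 3 + (of_nat k) ^ 3" using Suc frob3 by simp
  also have "(of_nat k :: 'a) ^ 3 = of_nat k"
    using G_frob[of "of_nat k" 1] unfolding prime_subfield_def by simp
  finally show ?case using assms by simp
qed

lemma of_nat_zero_mod3: assumes "(of_nat j :: 'a) = 0" shows "j mod 3 = 0"
proof -
  have h: "(of_nat (j mod 3) :: 'a) = 0" using assms of_nat_mod3[of j] by simp
  have "j mod 3 = 0 \<or> j mod 3 = 1 \<or> j mod 3 = 2" by auto
  thus ?thesis
  proof (elim disjE)
    assume "j mod 3 = 1" thus ?thesis using h by simp
  next
    assume "j mod 3 = 2" thus ?thesis using h two_eq by simp
  qed
qed

lemma noX: "((x::'a) ^ L) ^ 2 - x * x ^ L - 1 \<noteq> 0"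
proof
  assume E1: "(x ^ L) ^ 2 - x * x ^ L - 1 = 0"
  define R where "R = x ^ L"
  define Q where "Q = R ^ L"
  have E1': "R ^ 2 - x * R - 1 = 0" using E1 R_def by simp
  have E2: "Q ^ 2 - R * Q - 1 = 0"
  proof -
    have "(R ^ 2 - x * R - 1) ^ L = (R ^ 2) ^ L - (x * R) ^ L - 1 ^ L"
      by (simp only: frob_diff)
    also have "\<dots> = Q ^ 2 - R * Q - 1"
      unfolding Q_def R_def by (simp add: pow_sq_L power_mult_distrib)
    finally show ?thesis using E1' by (simp add: power_0_left)
  qed
  have x3: "x = Q ^ 3" using sig_sig_3[of x] R_def Q_def by simp
  have id: "Q ^ 6 + Q ^ 4 - 1 = - (Q ^ 2 * (R ^ 2 - Q ^ 3 * R - 1)) - (Q ^ 2 - R * Q - 1) * (R * Q + Q ^ 2 - 1 - Q ^ 4) + 3 * (Q ^ 4 - Q ^ 2)"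
    by algebra
  have Q6: "Q ^ 6 + Q ^ 4 - 1 = 0"
    using E1' E2 x3 three_zero by (subst id) simp
  have Qnz: "Q \<noteq> 0" using E2 by auto
  define Z where "Z = 1 / Q ^ 2"
  have Z3: "Z ^ 3 = Z + 1"
  proof -
    have "Q ^ 6 * (Z ^ 3 - Z - 1) = 1 - Q ^ 4 - Q ^ 6"
      unfolding Z_def using Qnz by (simp add: field_simps power_divide)
    also have "(1::'a) - Q ^ 4 - Q ^ 6 = - (Q ^ 6 + Q ^ 4 - 1)" by algebra
    finally have "Q ^ 6 * (Z ^ 3 - Z - 1) = 0" using Q6 by simp
    hence "Z ^ 3 - Z - 1 = 0" using Qnz by simp
    thus ?thesis by (simp add: algebra_simps)
  qed
  have "(of_nat m :: 'a) = 0" using Z_iter[OF Z3, of m] pow_q[of Z] by simp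
  hence m3: "m mod 3 = 0" by (rule of_nat_zero_mod3)
  have l3: "l mod 3 = 1" using m3 m_def by presburger
  have sZ: "Z ^ L = Z ^ 3"
  proof -
    have "Z ^ L = Z + of_nat l" by (rule Z_iter[OF Z3])
    also have "(of_nat l :: 'a) = of_nat (l mod 3)" by (rule of_nat_mod3)
    finally show ?thesis using l3 Z3 by simp
  qed
  define S where "S = Q ^ L"
  have "Z ^ L = 1 / S ^ 2" unfolding Z_def S_def by (simp add: power_one_over pow_sq_L)
  moreover have "Z ^ 3 = 1 / (Q ^ 3) ^ 2" unfolding Z_def by (simp add: power_one_over power_mult[symmetric])
  ultimately have "S ^ 2 = (Q ^ 3) ^ 2" using sZ by simp
  hence S_cases: "S = Q ^ 3 \<or> S = - (Q ^ 3)" by (rule power2_eq_iff[THEN iffD1])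
  have RS: "R = S ^ 3" using sig_sig_3[of R] unfolding S_def Q_def by simp
  have SQ: "S = Q ^ 3"
  proof (rule ccontr)
    assume "S \<noteq> Q ^ 3"
    hence Sn: "S = - (Q ^ 3)" using S_cases by simp
    have "S ^ L = - ((Q ^ L) ^ 3)" unfolding Sn by (simp add: frob_neg pow_3_L)
    also have "\<dots> = Q ^ 9" using Sn unfolding S_def[symmetric] by (simp add: power_mult[symmetric])
    finally have "S ^ L = Q ^ 9" .
    hence Q27: "Q ^ 27 = Q" using sig_sig_3[of Q] unfolding S_def by (simp add: power_mult[symmetric])
    have Qk: "\<And>k. Q ^ (3 ^ (3 * k)) = Q"
    proof -
      fix k show "Q ^ (3 ^ (3 * k)) = Q"
      proof (induction k)
        case 0 thus ?case by simp
      next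
        case (Suc k)
        have "Q ^ (3 ^ (3 * Suc k)) = (Q ^ (3 ^ (3 * k))) ^ 27"
          by (simp add: power_mult[symmetric] power_add mult.commute)
        thus ?case using Suc Q27 by simp
      qed
    qed
    have "l = 3 * (l div 3) + 1" using l3 by presburger
    hence "Q ^ L = (Q ^ (3 ^ (3 * (l div 3)))) ^ 3"
      by (metis power_mult power_Suc2 add.commute plus_1_eq_Suc)
    hence "S = Q ^ 3" unfolding S_def using Qk by simp
    thus False using \<open>S \<noteq> Q ^ 3\<close> by simp
  qed
  have "R = Q ^ 9" using RS SQ by (simp add: power_mult[symmetric])
  moreover have "Q ^ 10 = Q ^ 9 * Q" by algebra
  ultimately have G10: "Q ^ 2 - Q ^ 10 - 1 = 0" using E2 by simp
  have idQ: "Q ^ 2 - 1 = 2 * ((Q ^ 2 - Q ^ 10 - 1) + (Q ^ 6 + Q ^ 4 - 1) * (Q ^ 4 - Q ^ 2 + 1)) - 3 * (Q ^ 2 - 1)"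
    by algebra
  have "Q ^ 2 - 1 = 0" by (subst idQ) (simp only: G10 Q6 three_zero, simp)
  hence Q2: "Q ^ 2 = 1" by simp
  have "Q ^ 6 = (Q ^ 2) ^ 3" "Q ^ 4 = (Q ^ 2) ^ 2" by algebra+
  hence "Q ^ 6 = 1" "Q ^ 4 = 1" using Q2 by simp_all
  thus False using Q6 by simp
qed


lemma v_pow: "(x::'a) ^ (2 * L + 1) = x * (x ^ L) ^ 2" by (rule v_split)

lemma lemA: assumes "a \<noteq> 0" "b \<noteq> 0"
  and E0: "a ^ (2 * L + 1) + b ^ (2 * L + 1) + (- (a + b)) ^ (2 * L + 1) = (0::'a)"
  shows "b = a \<or> b = - a"
proof -
  define A where "A = a ^ L"
  define B where "B = b ^ L"
  have nA: "(- (a + b)) ^ L = - (A + B)" unfolding A_def B_def by (simp only: frob_neg frob_add)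
  have E: "a * A ^ 2 + b * B ^ 2 + (- (a + b)) * (- (A + B)) ^ 2 = 0"
    using E0 unfolding v_pow nA A_def[symmetric] B_def[symmetric] by simp
  have idA: "(B - A) * (a * B - b * A) = - (a * A ^ 2 + b * B ^ 2 + (- (a + b)) * (- (A + B)) ^ 2) - 3 * (A * B * (a + b))"
    by algebra
  have "(B - A) * (a * B - b * A) = 0" by (subst idA) (simp only: E three_zero, simp)
  hence "B = A \<or> a * B = b * A" by simp
  thus ?thesis
  proof
    assume "B = A" hence "b = a" unfolding A_def B_def by (rule frob_inj)
    thus ?thesis by simp
  next
    assume h: "a * B = b * A"
    define t where "t = b / a"
    have Anz: "A \<noteq> 0" unfolding A_def using assms(1) by simp
    have "t ^ L = B / A" unfolding t_def A_def B_def by (simp add: power_divide)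
    also have "\<dots> = t" unfolding t_def using h Anz assms(1) by (simp add: field_simps)
    finally have tL: "t ^ L = t" .
    have "t ^ 3 = t" using sig_sig_3[of t] tL by simp
    moreover have "t \<noteq> 0" unfolding t_def using assms by simp
    moreover have "t * (t - 1) * (t + 1) = t ^ 3 - t" by algebra
    ultimately have "t * (t - 1) * (t + 1) = 0" by simp
    hence "t - 1 = 0 \<or> t + 1 = 0" using \<open>t \<noteq> 0\<close> by simp
    hence "t = 1 \<or> t = -1" by (metis add_eq_0_iff2 eq_iff_diff_eq_0)
    moreover have "b = a * t" unfolding t_def using assms(1) by simp
    ultimately show ?thesis by auto
  qed
qed

lemma frac_id0: fixes c D e d :: 'a assumes "d \<noteq> 0" "D \<noteq> 0"
  shows "(c / D) ^ 2 - e / d * (c / D) - 1 = (c ^ 2 * d - e * c * D - D ^ 2 * d) / (D ^ 2 * d)"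
  using assms by (simp add: field_simps power2_eq_square)

lemma frac_id: fixes a b A B :: 'a assumes "a + b \<noteq> 0" "A + B \<noteq> 0"
  shows "((A - B) / (A + B)) ^ 2 - (a - b) / (a + b) * ((A - B) / (A + B)) - 1
    = ((A - B) ^ 2 * (a + b) - (a - b) * (A - B) * (A + B) - (A + B) ^ 2 * (a + b)) / ((A + B) ^ 2 * (a + b))"
  by (rule frac_id0[OF assms])

lemma lemB: assumes "a \<noteq> 0"
  and E0: "a ^ (2 * L + 1) + b ^ (2 * L + 1) + (a + b) ^ (2 * L + 1) = (0::'a)"
  shows "b = - a"
proof (rule ccontr)
  assume "b \<noteq> - a"
  hence s: "a + b \<noteq> 0" by (metis add.commute add_eq_0_iff2)
  define A where "A = a ^ L"
  define B where "B = b ^ L"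
  have pA: "(a + b) ^ L = A + B" unfolding A_def B_def by (simp add: frob_add)
  have E: "a * A ^ 2 + b * B ^ 2 + (a + b) * (A + B) ^ 2 = 0"
    using E0 unfolding v_pow pA A_def[symmetric] B_def[symmetric] by simp
  have ABnz: "A + B \<noteq> 0" using s pA[symmetric] by simp
  have idB: "(A - B) ^ 2 * (a + b) - (a - b) * (A - B) * (A + B) - (A + B) ^ 2 * (a + b)
      = (a * A ^ 2 + b * B ^ 2 + (a + b) * (A + B) ^ 2) - 3 * (2 * A * B * (a + b) + a * A ^ 2 + b * B ^ 2)"
    by algebra
  have ex0: "(A - B) ^ 2 * (a + b) - (a - b) * (A - B) * (A + B) - (A + B) ^ 2 * (a + b) = 0"
    by (subst idB) (simp only: E three_zero, simp)
  define x where "x = (a - b) / (a + b)"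
  have xL: "x ^ L = (A - B) / (A + B)"
    unfolding x_def A_def B_def by (simp add: power_divide frob_diff frob_add)
  have "(x ^ L) ^ 2 - x * x ^ L - 1
     = ((A - B) ^ 2 * (a + b) - (a - b) * (A - B) * (A + B) - (A + B) ^ 2 * (a + b)) / ((A + B) ^ 2 * (a + b))"
    by (simp only: xL, simp only: x_def frac_id[OF s ABnz])
  also have "\<dots> = 0" using ex0 by simp
  finally show False using noX[of x] by simp
qed

lemma negv: "(- (x::'a)) ^ (2 * L + 1) = - (x ^ (2 * L + 1))"
  by (rule power_minus_odd) simp

lemma pm_v: "(s::'a) = 1 \<or> s = -1 \<Longrightarrow> s ^ (2 * L + 1) = s"
  using negv[of 1] by auto

lemma pm_sq: "(s::'a) = 1 \<or> s = -1 \<Longrightarrow> s * s = 1"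
  by auto

lemma zrel: assumes "a \<noteq> 0" "\<alpha> = 1 \<or> \<alpha> = (-1::'a)"
  shows "a ^ K * (\<alpha> * a ^ (K + 1)) ^ (2 * L + 1) = \<alpha> * a ^ (2 * L + 1)"
proof -
  define e where "e = a ^ K"
  have e: "e = 1 \<or> e = -1" unfolding e_def using eta_sq[OF assms(1)] .
  have "a ^ (K + 1) = a * e" unfolding e_def by simp
  hence "(\<alpha> * a ^ (K + 1)) ^ (2 * L + 1) = \<alpha> ^ (2 * L + 1) * (a ^ (2 * L + 1) * e ^ (2 * L + 1))"
    by (simp only: power_mult_distrib)
  also have "\<dots> = \<alpha> * (a ^ (2 * L + 1) * e)" by (simp only: pm_v[OF e] pm_v[OF assms(2)])
  finally have f: "(\<alpha> * a ^ (K + 1)) ^ (2 * L + 1) = \<alpha> * (a ^ (2 * L + 1) * e)" .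
  have "a ^ K * (\<alpha> * a ^ (K + 1)) ^ (2 * L + 1) = e * (\<alpha> * (a ^ (2 * L + 1) * e))"
    by (simp only: f e_def)
  also have "\<dots> = \<alpha> * a ^ (2 * L + 1) * (e * e)" by (simp only: mult_ac)
  also have "\<dots> = \<alpha> * a ^ (2 * L + 1)" using pm_sq[OF e] by simp
  finally show ?thesis .
qed

lemma lemD: assumes "a \<noteq> 0" "b \<noteq> 0" "\<alpha> = 1 \<or> \<alpha> = (-1::'a)" "\<beta> = 1 \<or> \<beta> = (-1::'a)"
  and eK: "a ^ K = b ^ K"
  and z: "\<alpha> * a ^ (K + 1) = \<beta> * b ^ (K + 1) \<or> \<alpha> * a ^ (K + 1) = - (\<beta> * b ^ (K + 1))"
  shows "a = b"
proof -
  define e where "e = a ^ K"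
  have e: "e = 1 \<or> e = -1" unfolding e_def using eta_sq[OF assms(1)] .
  have enz: "e \<noteq> 0" using e by auto
  have "\<alpha> * a * e = \<beta> * b * e \<or> \<alpha> * a * e = - (\<beta> * b * e)" using z eK unfolding e_def
    by (simp add: algebra_simps)
  hence "\<alpha> * a = \<beta> * b \<or> \<alpha> * a = - (\<beta> * b)"
  proof (elim disjE)
    assume "\<alpha> * a * e = \<beta> * b * e" thus ?thesis using enz mult_right_cancel by blast
  next
    assume "\<alpha> * a * e = - (\<beta> * b * e)"
    hence "\<alpha> * a * e = (- (\<beta> * b)) * e" by simp
    thus ?thesis using enz mult_right_cancel by blast
  qed
  hence ab: "a = b \<or> a = - b" using assms(3,4) by (auto simp: minus_equation_iff)
  show ?thesis
  proof (rule ccontr)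
    assume "a \<noteq> b"
    hence "a = - b" using ab by simp
    hence "a ^ K = - (b ^ K)" using power_minus_odd[OF K_odd, of b] by simp
    hence "b ^ K = - (b ^ K)" using eK by simp
    hence "b ^ K + b ^ K = 0" by (simp only: eq_neg_iff_add_eq_0)
    hence "(2::'a) * b ^ K = 0" by (simp only: mult_2)
    hence "b ^ K = 0" using two_eq by simp
    thus False using assms(2) by simp
  qed
qed

lemma core3: assumes nz: "z1 \<noteq> 0" "z2 \<noteq> 0" "z3 \<noteq> (0::'a)"
  and s: "z1 + z2 + z3 = 0"
  and e: "e1 = 1 \<or> e1 = -1" "e2 = 1 \<or> e2 = -1" "e3 = 1 \<or> e3 = (-1::'a)"
  and E: "e1 * z1 ^ (2 * L + 1) + e2 * z2 ^ (2 * L + 1) + e3 * z3 ^ (2 * L + 1) = 0"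
  shows "(e1 = e2 \<and> (z2 = z1 \<or> z2 = - z1)) \<or> (e1 = e3 \<and> (z3 = z1 \<or> z3 = - z1))
       \<or> (e2 = e3 \<and> (z3 = z2 \<or> z3 = - z2))"
proof -
  have "z3 = - (z1 + z2) + (z1 + z2 + z3)" "z2 = - (z1 + z3) + (z1 + z2 + z3)"
    "z1 = - (z2 + z3) + (z1 + z2 + z3)" by algebra+
  hence z3: "z3 = - (z1 + z2)" and z2: "z2 = - (z1 + z3)" and z1: "z1 = - (z2 + z3)"
    using s by simp_all
  have c: "(e1 = e2 \<and> e2 = e3) \<or> (e1 = e2 \<and> e3 = - e1) \<or> (e1 = e3 \<and> e2 = - e1) \<or> (e2 = e3 \<and> e1 = - e2)"
    using e by auto
  thus ?thesis
  proof (elim disjE conjE)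
    assume h: "e1 = e2" "e2 = e3"
    hence "e1 * (z1 ^ (2 * L + 1) + z2 ^ (2 * L + 1) + (- (z1 + z2)) ^ (2 * L + 1)) = 0"
      using E z3 by (simp add: algebra_simps)
    hence "z1 ^ (2 * L + 1) + z2 ^ (2 * L + 1) + (- (z1 + z2)) ^ (2 * L + 1) = 0" using e(1) by auto
    hence "z2 = z1 \<or> z2 = - z1" by (rule lemA[OF nz(1,2)])
    thus ?thesis using h by simp
  next
    assume h: "e1 = e2" "e3 = - e1"
    hence "e1 * (z1 ^ (2 * L + 1) + z2 ^ (2 * L + 1) + (z1 + z2) ^ (2 * L + 1)) = 0"
      using E z3 negv[of "z1 + z2"] by (simp add: algebra_simps)
    hence "z1 ^ (2 * L + 1) + z2 ^ (2 * L + 1) + (z1 + z2) ^ (2 * L + 1) = 0" using e(1) by auto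
    hence "z2 = - z1" by (rule lemB[OF nz(1)])
    thus ?thesis using h by simp
  next
    assume h: "e1 = e3" "e2 = - e1"
    hence "e1 * (z1 ^ (2 * L + 1) + z3 ^ (2 * L + 1) + (z1 + z3) ^ (2 * L + 1)) = 0"
      using E z2 negv[of "z1 + z3"] by (simp add: algebra_simps)
    hence "z1 ^ (2 * L + 1) + z3 ^ (2 * L + 1) + (z1 + z3) ^ (2 * L + 1) = 0" using e(1) by auto
    hence "z3 = - z1" by (rule lemB[OF nz(1)])
    thus ?thesis using h by simp
  next
    assume h: "e2 = e3" "e1 = - e2"
    hence "e2 * (z2 ^ (2 * L + 1) + z3 ^ (2 * L + 1) + (z2 + z3) ^ (2 * L + 1)) = 0"
      using E z1 negv[of "z2 + z3"] by (simp add: algebra_simps)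
    hence "z2 ^ (2 * L + 1) + z3 ^ (2 * L + 1) + (z2 + z3) ^ (2 * L + 1) = 0" using e(2) by auto
    hence "z3 = - z2" by (rule lemB[OF nz(2)])
    thus ?thesis using h by simp
  qed
qed

lemma zK_nz: "a \<noteq> 0 \<Longrightarrow> \<alpha> = 1 \<or> \<alpha> = (-1::'a) \<Longrightarrow> \<alpha> * a ^ (K + 1) \<noteq> 0"
  by auto

lemma W2: assumes "a \<noteq> 0" "b \<noteq> 0" "a \<noteq> b" "\<alpha> = 1 \<or> \<alpha> = (-1::'a)" "\<beta> = 1 \<or> \<beta> = (-1::'a)"
  and U: "\<alpha> * a ^ (K + 1) + \<beta> * b ^ (K + 1) = 0"
  and V: "\<alpha> * a ^ (2 * L + 1) + \<beta> * b ^ (2 * L + 1) = 0"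
  shows False
proof -
  define z1 where "z1 = \<alpha> * a ^ (K + 1)"
  define z2 where "z2 = \<beta> * b ^ (K + 1)"
  have z2: "z2 = - z1" using U unfolding z1_def z2_def by (simp add: eq_neg_iff_add_eq_0 add.commute)
  have z1nz: "z1 \<noteq> 0" unfolding z1_def using assms(1,4) by auto
  have "a ^ K * z1 ^ (2 * L + 1) + b ^ K * z2 ^ (2 * L + 1) = 0"
    unfolding z1_def z2_def zrel[OF assms(1,4)] zrel[OF assms(2,5)] by (rule V)
  hence "(a ^ K - b ^ K) * z1 ^ (2 * L + 1) = 0" unfolding z2 negv by (simp add: algebra_simps)
  hence "a ^ K = b ^ K" using z1nz by simp
  moreover have "\<alpha> * a ^ (K + 1) = - (\<beta> * b ^ (K + 1))" using z2 unfolding z1_def z2_def by simp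
  ultimately have "a = b" using lemD[OF assms(1,2,4,5)] by blast
  thus False using assms(3) by simp
qed

lemma W3: assumes nz: "a \<noteq> 0" "b \<noteq> 0" "c \<noteq> 0" and d: "a \<noteq> b" "a \<noteq> c" "b \<noteq> c"
  and s: "\<alpha> = 1 \<or> \<alpha> = (-1::'a)" "\<beta> = 1 \<or> \<beta> = (-1::'a)" "\<gamma> = 1 \<or> \<gamma> = (-1::'a)"
  and U: "\<alpha> * a ^ (K + 1) + \<beta> * b ^ (K + 1) + \<gamma> * c ^ (K + 1) = 0"
  and V: "\<alpha> * a ^ (2 * L + 1) + \<beta> * b ^ (2 * L + 1) + \<gamma> * c ^ (2 * L + 1) = 0"
  shows False
proof -
  define z1 where "z1 = \<alpha> * a ^ (K + 1)"
  define z2 where "z2 = \<beta> * b ^ (K + 1)"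
  define z3 where "z3 = \<gamma> * c ^ (K + 1)"
  have E: "a ^ K * z1 ^ (2 * L + 1) + b ^ K * z2 ^ (2 * L + 1) + c ^ K * z3 ^ (2 * L + 1) = 0"
    unfolding z1_def z2_def z3_def zrel[OF nz(1) s(1)] zrel[OF nz(2) s(2)] zrel[OF nz(3) s(3)] by (rule V)
  have "(a ^ K = b ^ K \<and> (z2 = z1 \<or> z2 = - z1)) \<or> (a ^ K = c ^ K \<and> (z3 = z1 \<or> z3 = - z1))
       \<or> (b ^ K = c ^ K \<and> (z3 = z2 \<or> z3 = - z2))"
    by (rule core3[OF _ _ _ _ eta_sq[OF nz(1)] eta_sq[OF nz(2)] eta_sq[OF nz(3)] E])
      (use U nz s in \<open>auto simp: z1_def z2_def z3_def\<close>)
  moreover have "\<not> (a ^ K = b ^ K \<and> (z2 = z1 \<or> z2 = - z1))"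
    using lemD[OF nz(1,2) s(1,2)] d unfolding z1_def z2_def by (metis minus_minus)
  moreover have "\<not> (a ^ K = c ^ K \<and> (z3 = z1 \<or> z3 = - z1))"
    using lemD[OF nz(1,3) s(1,3)] d unfolding z1_def z3_def by (metis minus_minus)
  moreover have "\<not> (b ^ K = c ^ K \<and> (z3 = z2 \<or> z3 = - z2))"
    using lemD[OF nz(2,3) s(2,3)] d unfolding z2_def z3_def by (metis minus_minus)
  ultimately show False by blast
qed
end



context gf3l begin

definition Dsp :: "(nat \<Rightarrow> 'a) set" where
  "Dsp = {c. (\<forall>i. c i \<in> prime_subfield) \<and> (\<forall>i\<ge>N. c i = 0)}"

definition Phi :: "nat \<Rightarrow> (nat \<Rightarrow> 'a) \<Rightarrow> 'a" where
  "Phi w c = (\<Sum>i<N. c i * p ^ (w * i))"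

abbreviation U :: nat where "U \<equiv> K + 1"
abbreviation V :: nat where "V \<equiv> 2 * L + 1"

abbreviation Code where "Code \<equiv> cyclic_code_uv N p U V"

lemma Code_eq: "Code = {c \<in> Dsp. Phi U c = 0 \<and> Phi V c = 0}"
  unfolding cyclic_code_uv_def Dsp_def Phi_def by auto

lemma p_inj: "i < N \<Longrightarrow> j < N \<Longrightarrow> p ^ i = p ^ j \<Longrightarrow> i = j"
proof (induction i j rule: linorder_wlog)
  case (le a b)
  hence "N dvd (b - a)" using p_pow_inj by blast
  thus ?case using le by (metis diff_less_mono2 dvd_imp_le le_antisym zero_less_diff
     diff_le_self le_trans not_less diff_zero less_imp_diff_less)
next
  case (sym a b) thus ?case by auto
qed

lemma pm_of_G: "x \<in> prime_subfield \<Longrightarrow> x \<noteq> 0 \<Longrightarrow> x = 1 \<or> x = (-1::'a)"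
  using G_iff by auto

lemma Phi_supp: assumes "c \<in> Dsp"
  shows "Phi w c = (\<Sum>i\<in>{i. i < N \<and> c i \<noteq> 0}. c i * (p ^ i) ^ w)"
  unfolding Phi_def
  by (rule sum.mono_neutral_cong_right) (auto simp: power_mult[symmetric] mult.commute)

lemma wt_ge4: assumes cC: "c \<in> Code" and nz: "i0 < N" "c i0 \<noteq> 0"
  shows "4 \<le> card {i. i < N \<and> c i \<noteq> 0}"
proof (rule ccontr)
  define S where "S = {i. i < N \<and> c i \<noteq> 0}"
  assume "\<not> 4 \<le> card {i. i < N \<and> c i \<noteq> 0}"
  hence c3: "card S \<le> 3" unfolding S_def by simp
  have fS: "finite S" unfolding S_def by simp
  have "i0 \<in> S" unfolding S_def using nz by simp
  hence "card S \<noteq> 0" using fS by auto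
  hence cases: "card S = 1 \<or> card S = 2 \<or> card S = 3" using c3 by auto
  have cD: "c \<in> Dsp" and PU: "Phi U c = 0" and PV: "Phi V c = 0" using cC Code_eq by auto
  have PU': "(\<Sum>i\<in>S. c i * (p ^ i) ^ U) = 0" using PU Phi_supp[OF cD, of U] S_def by simp
  have PV': "(\<Sum>i\<in>S. c i * (p ^ i) ^ V) = 0" using PV Phi_supp[OF cD, of V] S_def by simp
  have val: "\<And>i. i \<in> S \<Longrightarrow> c i = 1 \<or> c i = -1"
    using cD unfolding S_def Dsp_def G_iff by auto
  have Sl: "\<And>i. i \<in> S \<Longrightarrow> i < N" unfolding S_def by simp
  have pnz: "\<And>i. p ^ i \<noteq> 0" using p_nz by simp
  have pd: "\<And>i j. i \<in> S \<Longrightarrow> j \<in> S \<Longrightarrow> i \<noteq> j \<Longrightarrow> p ^ i \<noteq> p ^ j"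
    using p_inj Sl by blast
  from cases show False
  proof (elim disjE)
    assume "card S = 1"
    then obtain x where Sx: "S = {x}" by (auto simp: card_1_singleton_iff)
    hence "c x * (p ^ x) ^ U = 0" using PU' by simp
    moreover have "c x \<noteq> 0" using Sx S_def by auto
    ultimately show False using p_nz by simp
  next
    assume "card S = 2"
    then obtain x y where Sxy: "S = {x, y}" "x \<noteq> y" by (auto simp: card_2_iff)
    show False
      by (rule W2[of "p ^ x" "p ^ y" "c x" "c y"])
        (use Sxy PU' PV' pnz pd val in auto)
  next
    assume "card S = 3"
    then obtain x y z where Sxyz: "S = {x, y, z}" "x \<noteq> y" "y \<noteq> z" "x \<noteq> z"
      by (auto simp: card_3_iff)
    show False
      by (rule W3[of "p ^ x" "p ^ y" "p ^ z" "c x" "c y" "c z"])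
        (use Sxyz PU' PV' pnz pd val in \<open>auto simp: add.assoc\<close>)
  qed
qed


definition Dn :: "nat \<Rightarrow> (nat \<Rightarrow> 'a) set" where
  "Dn k = {c. (\<forall>i. c i \<in> prime_subfield) \<and> (\<forall>i\<ge>k. c i = 0)}"

lemma card_Dn: "card (Dn k) = 3 ^ k"
proof -
  have "bij_betw (\<lambda>c. restrict c {..<k}) (Dn k) (PiE {..<k} (\<lambda>_. prime_subfield))"
  proof (rule bij_betw_byWitness[where f' = "\<lambda>f i. if i < k then f i else 0"])
    show "\<forall>a\<in>Dn k. (\<lambda>i. if i < k then restrict a {..<k} i else 0) = a"
      unfolding Dn_def by (auto simp: fun_eq_iff)
    show "\<forall>a'\<in>PiE {..<k} (\<lambda>_. prime_subfield). restrict (\<lambda>i. if i < k then a' i else 0) {..<k} = a'"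
      by (auto simp: fun_eq_iff PiE_def extensional_def)
    show "(\<lambda>c. restrict c {..<k}) ` Dn k \<subseteq> PiE {..<k} (\<lambda>_. prime_subfield)"
    proof
      fix f assume "f \<in> (\<lambda>c. restrict c {..<k}) ` Dn k"
      then obtain c where c: "c \<in> Dn k" "f = restrict c {..<k}" by auto
      have "\<forall>i\<in>{..<k}. c i \<in> prime_subfield" using c(1) unfolding Dn_def by simp
      hence "restrict c {..<k} \<in> PiE {..<k} (\<lambda>_. prime_subfield)" by (rule restrict_PiE_iff[THEN iffD2])
      thus "f \<in> PiE {..<k} (\<lambda>_. prime_subfield)" using c(2) by simp
    qed
    show "(\<lambda>f i. if i < k then f i else 0) ` PiE {..<k} (\<lambda>_. prime_subfield) \<subseteq> Dn k"
      unfolding Dn_def using G_zero by (auto simp: PiE_def Pi_def)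
  qed
  hence "card (Dn k) = card (PiE {..<k} (\<lambda>_. (prime_subfield :: 'a set)))" by (rule bij_betw_same_card)
  also have "\<dots> = 3 ^ k" by (simp add: card_PiE card_G)
  finally show ?thesis .
qed

lemma finite_Dn: "finite (Dn k)"
  using card_Dn[of k] card.infinite by fastforce

lemma Dsp_Dn: "Dsp = Dn N" unfolding Dsp_def Dn_def ..

lemma Dn_add: "x \<in> Dn k \<Longrightarrow> y \<in> Dn k \<Longrightarrow> (\<lambda>i. x i + y i) \<in> Dn k"
  unfolding Dn_def by (auto intro: G_add)

lemma Dn_diff: "x \<in> Dn k \<Longrightarrow> y \<in> Dn k \<Longrightarrow> (\<lambda>i. x i - y i) \<in> Dn k"
  unfolding Dn_def by (auto intro: G_diff)

lemma Phi_add: "Phi w (\<lambda>i. x i + y i) = Phi w x + Phi w y"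
  unfolding Phi_def by (simp add: sum.distrib distrib_right)

lemma Phi_diff: "Phi w (\<lambda>i. x i - y i) = Phi w x - Phi w y"
  unfolding Phi_def by (simp add: sum_subtractf left_diff_distrib)

definition SS :: "('a \<times> 'a) set" where
  "SS = {(Phi U c, Phi V c) | c. c \<in> Dsp}"

lemma SS_add: "(a1, b1) \<in> SS \<Longrightarrow> (a2, b2) \<in> SS \<Longrightarrow> (a1 + a2, b1 + b2) \<in> SS"
  unfolding SS_def Dsp_Dn
proof clarify
  fix c d assume "c \<in> Dn N" "d \<in> Dn N"
  thus "\<exists>e. (Phi U c + Phi U d, Phi V c + Phi V d) = (Phi U e, Phi V e) \<and> e \<in> Dn N"
    by (intro exI[of _ "\<lambda>i. c i + d i"]) (simp add: Phi_add Dn_add)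
qed

lemma SS_zero: "(0, 0) \<in> SS"
proof -
  have "(\<lambda>i. 0::'a) \<in> Dsp" unfolding Dsp_def using G_zero by simp
  moreover have "Phi w (\<lambda>i. 0) = 0" for w unfolding Phi_def by simp
  ultimately show ?thesis unfolding SS_def by force
qed

lemma SS_sum: "finite A \<Longrightarrow> (\<forall>j\<in>A. (f j, g j) \<in> SS) \<Longrightarrow> (\<Sum>j\<in>A. f j, \<Sum>j\<in>A. g j) \<in> SS"
  by (induction A rule: finite_induct) (auto intro: SS_add SS_zero)

lemma p_pow_cong: "a mod N = b mod N \<Longrightarrow> p ^ a = p ^ b"
  using p_pow_mod[of a] p_pow_mod[of b] by simp

lemma SS_mono: assumes "g \<in> prime_subfield" shows "(g * p ^ (U * k), g * p ^ (V * k)) \<in> SS"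
proof -
  define c where "c = (\<lambda>i. if i = k mod N then g else 0)"
  have kN: "k mod N < N" using N_pos by simp
  have cD: "c \<in> Dsp" unfolding Dsp_def c_def using assms G_zero kN by auto
  have "Phi w c = g * p ^ (w * (k mod N))" for w
  proof -
    have "Phi w c = (\<Sum>i<N. if i = k mod N then g * p ^ (w * i) else 0)"
      unfolding Phi_def c_def by (intro sum.cong) auto
    also have "\<dots> = g * p ^ (w * (k mod N))" using kN by (simp add: sum.delta)
    finally show ?thesis .
  qed
  moreover have "p ^ (w * (k mod N)) = p ^ (w * k)" for w
    by (rule p_pow_cong) (simp add: mod_mult_right_eq)
  ultimately have "Phi U c = g * p ^ (U * k)" "Phi V c = g * p ^ (V * k)" by simp_all
  thus ?thesis using cD unfolding SS_def by force
qed

lemma SS_scale: assumes "(a, b) \<in> SS" "g \<in> prime_subfield"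
  shows "(g * p ^ (U * k) * a, g * p ^ (V * k) * b) \<in> SS"
proof -
  obtain c where c: "c \<in> Dsp" "a = Phi U c" "b = Phi V c" using assms(1) unfolding SS_def by auto
  have cG: "\<And>i. c i \<in> prime_subfield" using c(1) unfolding Dsp_def by simp
  have hw: "g * p ^ (w * k) * Phi w c = (\<Sum>i<N. (g * c i) * p ^ (w * (i + k)))" for w
    unfolding Phi_def by (simp add: sum_distrib_left algebra_simps power_add)
  moreover have "(\<Sum>i<N. (g * c i) * p ^ (U * (i + k)), \<Sum>i<N. (g * c i) * p ^ (V * (i + k))) \<in> SS"
    by (rule SS_sum) (simp, intro ballI SS_mono G_mult assms(2) cG)
  moreover have "g * p ^ (U * k) * a = (\<Sum>i<N. (g * c i) * p ^ (U * (i + k)))" unfolding c(2) by (rule hw)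
  moreover have "g * p ^ (V * k) * b = (\<Sum>i<N. (g * c i) * p ^ (V * (i + k)))" unfolding c(3) by (rule hw)
  ultimately show ?thesis by simp
qed

lemma l_less_L: "l < L"
proof -
  have "l < 2 ^ l" by (rule less_exp)
  also have "(2::nat) ^ l \<le> 3 ^ l" by (rule power_mono) auto
  finally show ?thesis .
qed

lemma m_bound: "2 * m + 1 \<le> N"
proof -
  have Q: "L * L \<ge> 3 * L" using L_ge3 by simp
  show ?thesis using N_eq m_def l_less_L Q L_ge3 by linarith
qed

lemma pU: "p ^ U = - p" using p_K by simp

lemma SS_second: "\<exists>a. (a, y) \<in> SS"
proof (cases "y = 0")
  case True thus ?thesis using SS_zero by blast
next
  case False
  then obtain j where j: "y = p ^ j" using prim unfolding is_primitive_def by auto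
  define k where "k = j * (3 * (2 * L - 1))"
  have "(1 * p ^ (U * k), 1 * p ^ (V * k)) \<in> SS" by (rule SS_mono[OF G_one])
  moreover have "p ^ (V * k) = (p ^ j) ^ ((2 * L + 1) * (3 * (2 * L - 1)))"
    unfolding k_def by (simp add: power_mult[symmetric] mult_ac)
  ultimately have "(p ^ (U * k), y) \<in> SS" using v_inv j by simp
  thus ?thesis by blast
qed

lemma minus_one_pow_G: "(-1::'a) ^ j \<in> prime_subfield"
  unfolding G_iff by (cases "even j") auto

lemma SS_first: assumes "a \<noteq> 0" "(a, 0) \<in> SS" shows "(x, 0) \<in> SS"
proof (cases "x = 0")
  case True thus ?thesis using SS_zero by simp
next
  case False
  hence "x / a \<noteq> 0" using assms(1) by simp
  then obtain j where j: "x / a = p ^ j" using prim unfolding is_primitive_def by blast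
  have "((-1) ^ j * p ^ (U * j) * a, (-1) ^ j * p ^ (V * j) * 0) \<in> SS"
    by (rule SS_scale[OF assms(2) minus_one_pow_G])
  moreover have "(-1::'a) ^ j * p ^ (U * j) = p ^ j"
  proof -
    have "p ^ (U * j) = (- p) ^ j" by (simp only: power_mult pU)
    hence "(-1::'a) ^ j * p ^ (U * j) = ((-1) * (- p)) ^ j" by (simp only: power_mult_distrib)
    thus ?thesis by simp
  qed
  moreover have "p ^ j * a = x" using j assms(1) by (simp add: field_simps)
  ultimately show ?thesis by simp
qed

lemma frob_poly: fixes e :: "nat \<Rightarrow> 'a" assumes "\<And>i. e i \<in> prime_subfield"
  shows "(\<Sum>i\<le>m. e i * (x ^ (3 ^ j)) ^ i) = (\<Sum>i\<le>m. e i * x ^ i) ^ (3 ^ j)"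
proof -
  have "(\<Sum>i\<le>m. e i * x ^ i) ^ (3 ^ j) = (\<Sum>i\<le>m. (e i * x ^ i) ^ (3 ^ j))" by (rule frob_sum)
  also have "\<dots> = (\<Sum>i\<le>m. e i * (x ^ (3 ^ j)) ^ i)"
    by (intro sum.cong refl) (simp add: power_mult_distrib G_frob[OF assms] power_mult[symmetric] mult.commute)
  finally show ?thesis ..
qed

lemma conj_distinct: assumes "i < m" "j < m" "(p ^ V) ^ (3 ^ i) = (p ^ V) ^ (3 ^ j)" shows "i = j"
proof -
  have h: "\<And>a. ((p ^ V) ^ (3 ^ a)) ^ (3 * (2 * L - 1)) = p ^ (3 ^ a)"
  proof -
    fix a
    have "((p ^ V) ^ (3 ^ a)) ^ (3 * (2 * L - 1)) = (p ^ (3 ^ a)) ^ ((2 * L + 1) * (3 * (2 * L - 1)))"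
      by (simp only: power_mult[symmetric], simp only: mult_ac)
    thus "((p ^ V) ^ (3 ^ a)) ^ (3 * (2 * L - 1)) = p ^ (3 ^ a)" using v_inv by simp
  qed
  have e: "p ^ (3 ^ i) = p ^ (3 ^ j)" using h[of i] h[of j] assms(3) by simp
  show ?thesis
  proof (rule ccontr)
    assume "i \<noteq> j"
    then consider "i < j" | "j < i" by linarith
    thus False
    proof cases
      case 1
      have "(p ^ (3 ^ (j - i))) ^ (3 ^ i) = p ^ (3 ^ j)" using 1 by (simp add: frob_comp)
      hence "(p ^ (3 ^ (j - i))) ^ (3 ^ i) = p ^ (3 ^ i)" using e by simp
      hence "p ^ (3 ^ (j - i)) = p ^ 1" by (simp add: frob_inj)
      hence "N dvd (3 ^ (j - i) - 1)" using p_pow_inj[of 1 "3 ^ (j - i)"] by (simp add: eq_commute)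
      moreover have "0 < (3::nat) ^ (j - i) - 1" using 1 one_less_power[of "3::nat" "j - i"] by simp
      moreover have "(3::nat) ^ (j - i) < 3 ^ m" using 1 assms by (intro power_strict_increasing) auto
      ultimately show False using nat_dvd_not_less by fastforce
    next
      case 2
      have "(p ^ (3 ^ (i - j))) ^ (3 ^ j) = p ^ (3 ^ i)" using 2 by (simp add: frob_comp)
      hence "(p ^ (3 ^ (i - j))) ^ (3 ^ j) = p ^ (3 ^ j)" using e by simp
      hence "p ^ (3 ^ (i - j)) = p ^ 1" by (simp add: frob_inj)
      hence "N dvd (3 ^ (i - j) - 1)" using p_pow_inj[of 1 "3 ^ (i - j)"] by (simp add: eq_commute)
      moreover have "0 < (3::nat) ^ (i - j) - 1" using 2 one_less_power[of "3::nat" "i - j"] by simp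
      moreover have "(3::nat) ^ (i - j) < 3 ^ m" using 2 assms by (intro power_strict_increasing) auto
      ultimately show False using nat_dvd_not_less by fastforce
    qed
  qed
qed

lemma conj_ne_U: assumes "j < m" shows "(p ^ V) ^ (3 ^ j) \<noteq> p ^ U"
proof
  assume h: "(p ^ V) ^ (3 ^ j) = p ^ U"
  have "((p ^ V) ^ (3 ^ j)) ^ (3 ^ (m - j)) = p ^ V"
    using assms pow_q by (simp add: frob_comp)
  moreover have "(p ^ U) ^ (3 ^ (m - j)) = - (p ^ (3 ^ (m - j)))" using pU frob_neg by simp
  ultimately have "p ^ V = - (p ^ (3 ^ (m - j)))" using h by simp
  thus False using key_nonconj[of "m - j"] by blast
qed

lemma exists_a: "\<exists>a. a \<noteq> 0 \<and> (a, 0) \<in> SS"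
proof -
  have mN: "m + 1 \<le> N" using m_bound by simp
  have "\<not> inj_on (Phi V) (Dn (m + 1))"
  proof
    assume inj: "inj_on (Phi V) (Dn (m + 1))"
    have "card (Dn (m + 1)) \<le> card (UNIV :: 'a set)" by (rule card_inj_on_le[OF inj]) auto
    hence "(3::nat) ^ (m + 1) \<le> 3 ^ m" using card_Dn card_F by simp
    thus False by simp
  qed
  then obtain c1 c2 where c: "c1 \<in> Dn (m + 1)" "c2 \<in> Dn (m + 1)" "c1 \<noteq> c2" "Phi V c1 = Phi V c2"
    unfolding inj_on_def by auto
  define e where "e = (\<lambda>i. c1 i - c2 i)"
  have eD: "e \<in> Dn (m + 1)" unfolding e_def using Dn_diff c(1,2) by blast
  have eG: "\<And>i. e i \<in> prime_subfield" using eD unfolding Dn_def by simp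
  have ez: "\<And>i. m < i \<Longrightarrow> e i = 0" using eD unfolding Dn_def by simp
  have eDsp: "e \<in> Dsp" unfolding Dsp_def using eG ez mN by simp
  obtain i0 where i0: "e i0 \<noteq> 0" using c(3) unfolding e_def by (auto simp: fun_eq_iff)
  have i0m: "i0 \<le> m" using ez i0 by (meson not_le)
  have PV0: "Phi V e = 0" unfolding e_def Phi_diff using c(4) by simp
  define a where "a = Phi U e"
  have "(a, 0) \<in> SS" unfolding SS_def a_def using eDsp PV0 by force
  moreover have "a \<noteq> 0"
  proof
    assume a0: "a = 0"
    define f where "f = (\<Sum>i\<le>m. monom (e i) i)"
    have pf: "\<And>x. poly f x = (\<Sum>i\<le>m. e i * x ^ i)" unfolding f_def by (simp add: poly_sum poly_monom)
    have "coeff f i0 = e i0" unfolding f_def by (rule coeff_sum_monom[OF i0m])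
    hence fnz: "f \<noteq> 0" using i0 by auto
    have deg: "degree f \<le> m" unfolding f_def
      by (rule degree_sum_le) (auto intro: order_trans[OF degree_monom_le])
    have Phi_poly: "\<And>w. Phi w e = poly f (p ^ w)"
    proof -
      fix w
      have "Phi w e = (\<Sum>i\<le>m. e i * p ^ (w * i))" unfolding Phi_def
        by (rule sum.mono_neutral_right) (use mN ez in auto)
      thus "Phi w e = poly f (p ^ w)" unfolding pf by (simp add: power_mult)
    qed
    have r1: "poly f (p ^ U) = 0" using a0 Phi_poly unfolding a_def by simp
    have r2: "poly f ((p ^ V) ^ (3 ^ j)) = 0" for j
    proof -
      have "poly f ((p ^ V) ^ (3 ^ j)) = (poly f (p ^ V)) ^ (3 ^ j)" unfolding pf by (rule frob_poly[OF eG])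
      thus ?thesis using Phi_poly[of V] PV0 by simp
    qed
    define R where "R = insert (p ^ U) ((\<lambda>j. (p ^ V) ^ (3 ^ j)) ` {..<m})"
    have RS: "R \<subseteq> {x. poly f x = 0}" unfolding R_def using r1 r2 by auto
    have inj: "inj_on (\<lambda>j. (p ^ V) ^ (3 ^ j)) {..<m}"
      by (rule inj_onI) (use conj_distinct in auto)
    have nin: "p ^ U \<notin> (\<lambda>j. (p ^ V) ^ (3 ^ j)) ` {..<m}"
    proof
      assume "p ^ U \<in> (\<lambda>j. (p ^ V) ^ (3 ^ j)) ` {..<m}"
      then obtain j where "j \<in> {..<m}" "p ^ U = (p ^ V) ^ (3 ^ j)" by (rule imageE)
      thus False using conj_ne_U[of j] by (metis lessThan_iff)
    qed
    have "card R = m + 1" unfolding R_def using card_image[OF inj] nin by simp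
    moreover have "card R \<le> card {x. poly f x = 0}" by (rule card_mono[OF poly_roots_finite[OF fnz] RS])
    moreover have "card {x. poly f x = 0} \<le> degree f" by (rule card_poly_roots_bound[OF fnz])
    ultimately show False using deg by simp
  qed
  ultimately show ?thesis by blast
qed

lemma SS_all: "(x, y) \<in> SS"
proof -
  obtain a where a: "a \<noteq> 0" "(a, 0) \<in> SS" using exists_a by blast
  obtain b where b: "(b, y) \<in> SS" using SS_second by blast
  have "(x - b, 0) \<in> SS" by (rule SS_first[OF a])
  from SS_add[OF this b] show ?thesis by simp
qed

lemma Code_diff: "c \<in> Code \<Longrightarrow> d \<in> Code \<Longrightarrow> (\<lambda>i. c i - d i) \<in> Code"
  unfolding Code_eq Dsp_Dn by (auto simp: Dn_diff Phi_diff)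

lemma zero_Code: "(\<lambda>i. 0) \<in> Code"
  unfolding Code_eq Dsp_def Phi_def using G_zero by simp

lemma card_Code_mult: "card (UNIV :: 'a set) * card (UNIV :: 'a set) * card Code = 3 ^ N"
proof -
  define F where "F = (\<lambda>c. (Phi U c, Phi V c))"
  define s where "s = (\<lambda>y. SOME c. c \<in> Dsp \<and> F c = y)"
  have s: "\<And>y. s y \<in> Dsp \<and> F (s y) = y"
  proof -
    fix y
    have "\<exists>c. c \<in> Dsp \<and> F c = y" using SS_all[of "fst y" "snd y"] unfolding SS_def F_def by auto
    thus "s y \<in> Dsp \<and> F (s y) = y" unfolding s_def by (rule someI_ex)
  qed
  have FPhi: "\<And>c. F c = (Phi U c, Phi V c)" unfolding F_def ..
  have bij: "bij_betw (\<lambda>(y, k). (\<lambda>i. s y i + k i)) (UNIV \<times> Code) Dsp"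
  proof (rule bij_betw_byWitness[where f' = "\<lambda>x. (F x, \<lambda>i. x i - s (F x) i)"])
    show "\<forall>a\<in>UNIV \<times> Code. (\<lambda>x. (F x, \<lambda>i. x i - s (F x) i)) ((\<lambda>(y, k). (\<lambda>i. s y i + k i)) a) = a"
    proof
      fix a :: "('a \<times> 'a) \<times> (nat \<Rightarrow> 'a)" assume "a \<in> UNIV \<times> Code"
      then obtain y k where a: "a = (y, k)" and k: "k \<in> Code" by auto
      have "F (\<lambda>i. s y i + k i) = y"
        using s[of y] k unfolding FPhi Code_eq by (auto simp: Phi_add)
      thus "(\<lambda>x. (F x, \<lambda>i. x i - s (F x) i)) ((\<lambda>(y, k). (\<lambda>i. s y i + k i)) a) = a"
        unfolding a by simp
    qed
    show "\<forall>a'\<in>Dsp. (\<lambda>(y, k). (\<lambda>i. s y i + k i)) ((\<lambda>x. (F x, \<lambda>i. x i - s (F x) i)) a') = a'"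
      by simp
    show "(\<lambda>(y, k). (\<lambda>i. s y i + k i)) ` (UNIV \<times> Code) \<subseteq> Dsp"
      using s unfolding Code_eq Dsp_Dn by (auto intro: Dn_add)
    show "(\<lambda>x. (F x, \<lambda>i. x i - s (F x) i)) ` Dsp \<subseteq> UNIV \<times> Code"
    proof
      fix z assume "z \<in> (\<lambda>x. (F x, \<lambda>i. x i - s (F x) i)) ` Dsp"
      then obtain x where x: "x \<in> Dsp" and z: "z = (F x, \<lambda>i. x i - s (F x) i)" by auto
      have "(\<lambda>i. x i - s (F x) i) \<in> Dsp" using x s[of "F x"] unfolding Dsp_Dn by (intro Dn_diff) simp_all
      moreover have "Phi U (\<lambda>i. x i - s (F x) i) = 0" "Phi V (\<lambda>i. x i - s (F x) i) = 0"
        using s[of "F x"] unfolding Phi_diff FPhi by auto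
      ultimately have "(\<lambda>i. x i - s (F x) i) \<in> Code" unfolding Code_eq by simp
      thus "z \<in> UNIV \<times> Code" unfolding z by simp
    qed
  qed
  have "card ((UNIV :: ('a \<times> 'a) set) \<times> Code) = card Dsp" by (rule bij_betw_same_card[OF bij])
  moreover have "card (UNIV :: ('a \<times> 'a) set) = card (UNIV :: 'a set) * card (UNIV :: 'a set)"
    by (metis UNIV_Times_UNIV card_cartesian_product)
  ultimately show ?thesis using card_Dn Dsp_Dn by (simp add: card_cartesian_product)
qed

lemma card_Code: "card Code = 3 ^ (N - 2 * m)"
proof -
  have "3 ^ (2 * m) * card Code = 3 ^ (2 * m) * 3 ^ (N - 2 * m)"
  proof -
    have "3 ^ (2 * m) * card Code = (3::nat) ^ N" using card_Code_mult card_F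
      by (simp add: power_add[symmetric] mult_2)
    also have "\<dots> = 3 ^ (2 * m) * 3 ^ (N - 2 * m)" using m_bound by (simp add: power_add[symmetric])
    finally show ?thesis .
  qed
  thus ?thesis by simp
qed

lemma nonconj: "\<not> conjugate_GF3 (p ^ U) (p ^ V)"
proof
  assume "conjugate_GF3 (p ^ U) (p ^ V)"
  then obtain j where "p ^ V = (p ^ U) ^ (3 ^ j)" unfolding conjugate_GF3_def by blast
  hence "p ^ V = - (p ^ (3 ^ j))" using pU frob_neg by simp
  thus False using key_nonconj[of j] by blast
qed

definition ev :: "nat \<Rightarrow> nat \<Rightarrow> 'a \<Rightarrow> nat \<Rightarrow> 'a" where
  "ev i j s = (\<lambda>k. if i < j then (if k = i then 1 else if k = j then s else 0)
                 else if j < i then (if k = j then -1 else if k = i then s else 0)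
                 else (if k = i then s else 0))"

lemma ev_supp: "ev i j s k \<noteq> 0 \<Longrightarrow> k = i \<or> k = j"
  unfolding ev_def by (auto split: if_splits)

lemma ev_Dsp: assumes "i < N" "j < N" "s = 1 \<or> s = -1" shows "ev i j s \<in> Dsp"
proof -
  have "\<And>k. ev i j s k \<in> prime_subfield" unfolding ev_def G_iff using assms(3) by auto
  moreover have "\<And>k. N \<le> k \<Longrightarrow> ev i j s k = 0" using ev_supp assms(1,2) by fastforce
  ultimately show ?thesis unfolding Dsp_def by simp
qed

lemma ev_inj: assumes "s = 1 \<or> s = -1" "s' = 1 \<or> s' = -1" and e: "ev i j s = ev i' j' s'"
  shows "i = i' \<and> j = j' \<and> s = s'"
proof -
  have n1: "(1::'a) \<noteq> -1" by (rule one_neq_neg1)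
  have n2: "(-1::'a) \<noteq> 1" using n1 by simp
  have snz: "s \<noteq> 0" "s' \<noteq> 0" using assms(1,2) by auto
  have h: "\<And>k. ev i j s k = ev i' j' s' k" using e by simp
  note hi = h[of i] and hj = h[of j] and hi' = h[of i'] and hj' = h[of j']
  show ?thesis using hi hj hi' hj' n1 n2 snz assms(1,2) unfolding ev_def
    by (auto split: if_splits)
qed

abbreviation Aset :: "(nat \<times> nat \<times> 'a) set" where "Aset \<equiv> {..<N} \<times> {..<N} \<times> {1, -1}"

lemma card_Aset: "card Aset = N * (N * 2)"
proof -
  have "card {1, -1::'a} = 2" using one_neq_neg1 by simp
  thus ?thesis by (simp only: card_cartesian_product card_lessThan)
qed

lemma weight4_le: "card {k. k < N \<and> (ev i' j' s' k - ev i j s k) \<noteq> 0} \<le> 4"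
proof -
  have "{k. k < N \<and> (ev i' j' s' k - ev i j s k) \<noteq> 0} \<subseteq> {i, j, i', j'}"
  proof
    fix k assume "k \<in> {k. k < N \<and> (ev i' j' s' k - ev i j s k) \<noteq> 0}"
    hence "ev i' j' s' k \<noteq> 0 \<or> ev i j s k \<noteq> 0" by auto
    thus "k \<in> {i, j, i', j'}" using ev_supp[of i j s k] ev_supp[of i' j' s' k] by blast
  qed
  hence "card {k. k < N \<and> (ev i' j' s' k - ev i j s k) \<noteq> 0} \<le> card {i, j, i', j'}"
    by (intro card_mono) auto
  also have "card {i, j, i', j'} \<le> 4" by (auto simp: card_insert_if)
  finally show ?thesis .
qed

lemma exists_small: "\<exists>c\<in>Code. (\<exists>i<N. c i \<noteq> 0) \<and> card {i. i < N \<and> c i \<noteq> 0} \<le> 4"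
proof (rule ccontr)
  assume "\<not> ?thesis"
  hence H: "\<And>c. c \<in> Code \<Longrightarrow> (\<exists>i<N. c i \<noteq> 0) \<Longrightarrow> 4 < card {i. i < N \<and> c i \<noteq> 0}"
    by force
  define G where "G = (\<lambda>(c, (i, j, s)). (\<lambda>k. c k + ev i j s k))"
  have inj: "inj_on G (Code \<times> Aset)"
  proof (rule inj_onI)
    fix x y assume x: "x \<in> Code \<times> Aset" and y: "y \<in> Code \<times> Aset" and xy: "G x = G y"
    obtain c i j s where xe: "x = (c, (i, j, s))" by (cases x) auto
    obtain c' i' j' s' where ye: "y = (c', (i', j', s'))" by (cases y) auto
    have c: "c \<in> Code" "c' \<in> Code" using x y xe ye by auto
    have ss: "s = 1 \<or> s = -1" "s' = 1 \<or> s' = -1" using x y xe ye by auto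
    have eq: "\<And>k. c k + ev i j s k = c' k + ev i' j' s' k" using xy unfolding xe ye G_def by (simp add: fun_eq_iff)
    define d where "d = (\<lambda>k. c k - c' k)"
    have dC: "d \<in> Code" unfolding d_def by (rule Code_diff[OF c])
    have dk: "\<And>k. d k = ev i' j' s' k - ev i j s k"
    proof -
      fix k
      have "c k = c' k + ev i' j' s' k - ev i j s k" using eq[of k] by (simp only: eq_diff_eq)
      thus "d k = ev i' j' s' k - ev i j s k" unfolding d_def by simp
    qed
    have "\<not> (\<exists>k<N. d k \<noteq> 0)"
    proof
      assume "\<exists>k<N. d k \<noteq> 0"
      hence "4 < card {k. k < N \<and> d k \<noteq> 0}" using H[OF dC] by blast
      moreover have "card {k. k < N \<and> d k \<noteq> 0} \<le> 4" unfolding dk by (rule weight4_le)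
      ultimately show False by simp
    qed
    moreover have "\<And>k. N \<le> k \<Longrightarrow> d k = 0" using c unfolding Code_eq Dsp_def d_def by auto
    ultimately have "\<And>k. d k = 0" by (meson not_le)
    hence cc: "c = c'" unfolding d_def by (auto simp: fun_eq_iff)
    hence "ev i j s = ev i' j' s'" using eq by (auto simp: fun_eq_iff)
    hence "i = i' \<and> j = j' \<and> s = s'" by (rule ev_inj[OF ss])
    thus "x = y" using cc xe ye by simp
  qed
  have img: "G ` (Code \<times> Aset) \<subseteq> Dsp"
  proof
    fix z assume "z \<in> G ` (Code \<times> Aset)"
    then obtain c i j s where c: "c \<in> Code" and ij: "i < N" "j < N" and s: "s = 1 \<or> s = -1"
      and z: "z = G (c, (i, j, s))" by auto
    have "c \<in> Dsp" using c Code_eq by auto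
    hence "(\<lambda>k. c k + ev i j s k) \<in> Dsp" using ev_Dsp[OF ij s] unfolding Dsp_Dn by (rule Dn_add)
    thus "z \<in> Dsp" unfolding z G_def by simp
  qed
  have "card (Code \<times> Aset) \<le> card Dsp"
    by (rule card_inj_on_le[OF inj img]) (simp add: Dsp_Dn finite_Dn)
  hence "card Code * (N * (N * 2)) \<le> 3 ^ N" using card_Aset card_Dn Dsp_Dn
    by (simp only: card_cartesian_product)
  also have "\<dots> = card Code * (3 ^ m * 3 ^ m)" using card_Code_mult card_F by (simp add: mult_ac)
  finally have le: "card Code * (N * (N * 2)) \<le> card Code * (3 ^ m * 3 ^ m)" .
  have "card Code \<noteq> 0"
  proof -
    have "finite Code" using Code_eq finite_Dn Dsp_Dn by (metis (no_types, lifting) finite_subset mem_Collect_eq subsetI)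
    thus ?thesis using zero_Code by auto
  qed
  hence le2: "N * (N * 2) \<le> 3 ^ m * 3 ^ m" using le by (simp only: mult_le_cancel1)
  have q: "(3::nat) ^ m = N + 1" using N_pos by simp
  have N7: "N \<ge> 7" using m_bound m_def l_pos by linarith
  have "N * N \<ge> 7 * N" using N7 by simp
  thus False using le2 q N7 by (simp add: algebra_simps)
qed

lemma Code_zero_out: "c \<in> Code \<Longrightarrow> N \<le> i \<Longrightarrow> c i = 0"
  unfolding Code_eq Dsp_def by auto

lemma min_dist4: "min_dist N Code = 4"
proof -
  let ?M = "{hamming_dist N c d | c d. c \<in> Code \<and> d \<in> Code \<and> c \<noteq> d}"
  have lower: "\<forall>x\<in>?M. 4 \<le> x"
  proof
    fix x assume "x \<in> ?M"
    then obtain c d where cd: "c \<in> Code" "d \<in> Code" "c \<noteq> d" and x: "x = hamming_dist N c d" by blast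
    have "\<exists>i<N. c i \<noteq> d i"
    proof (rule ccontr)
      assume "\<not> (\<exists>i<N. c i \<noteq> d i)"
      hence "\<And>i. c i = d i" using Code_zero_out[OF cd(1)] Code_zero_out[OF cd(2)] by (metis not_le)
      thus False using cd(3) by (auto simp: fun_eq_iff)
    qed
    then obtain i0 where i0: "i0 < N" "c i0 \<noteq> d i0" by blast
    define e where "e = (\<lambda>i. c i - d i)"
    have eC: "e \<in> Code" unfolding e_def by (rule Code_diff[OF cd(1,2)])
    have "4 \<le> card {i. i < N \<and> e i \<noteq> 0}" by (rule wt_ge4[OF eC i0(1)]) (use i0 in \<open>simp add: e_def\<close>)
    moreover have "{i. i < N \<and> e i \<noteq> 0} = {i. i < N \<and> c i \<noteq> d i}" unfolding e_def by auto
    ultimately show "4 \<le> x" unfolding x hamming_dist_def by simp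
  qed
  have mem: "4 \<in> ?M"
  proof -
    obtain c where c: "c \<in> Code" and nz: "\<exists>i<N. c i \<noteq> 0" and le: "card {i. i < N \<and> c i \<noteq> 0} \<le> 4"
      using exists_small by blast
    obtain i0 where i0: "i0 < N" "c i0 \<noteq> 0" using nz by blast
    have "4 \<le> card {i. i < N \<and> c i \<noteq> 0}" by (rule wt_ge4[OF c i0])
    hence w: "card {i. i < N \<and> c i \<noteq> 0} = 4" using le by simp
    have "c \<noteq> (\<lambda>i. 0)" using i0 by auto
    moreover have "hamming_dist N c (\<lambda>i. 0) = 4" unfolding hamming_dist_def using w by simp
    ultimately show ?thesis using c zero_Code by force
  qed
  have fin: "finite ?M"
  proof (rule finite_subset)
    show "?M \<subseteq> {..N}"
    proof
      fix x assume "x \<in> ?M"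
      then obtain c d :: "nat \<Rightarrow> 'a" where x: "x = hamming_dist N c d" by blast
      have "x \<le> card {..<N}" unfolding x hamming_dist_def by (rule card_mono) auto
      thus "x \<in> {..N}" by simp
    qed
  qed simp
  show ?thesis unfolding min_dist_def by (rule Min_eqI[OF fin]) (use lower mem in auto)
qed
end

theorem theorem1:
  fixes l m u v :: nat and p :: "'a::{field,finite}"
  assumes "l \<ge> 1"
    and "m = 2 * l + 1"
    and "u = (3 ^ m + 1) div 2"
    and "v = 2 * 3 ^ l + 1"
    and "card (UNIV :: 'a set) = 3 ^ m"
    and "is_primitive p"
  shows "\<not> conjugate_GF3 (p ^ u) (p ^ v)
       \<and> card (cyclic_code_uv (3 ^ m - 1) p u v) = 3 ^ (3 ^ m - 1 - 2 * m)
       \<and> min_dist (3 ^ m - 1) (cyclic_code_uv (3 ^ m - 1) p u v) = 4"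
proof -
  interpret gf3l p m l
    by unfold_locales (use assms in auto)
  have uK: "u = K + 1" using assms(3) u_eq by simp
  show ?thesis unfolding uK assms(4) using nonconj card_Code min_dist4 by simp
qed


end
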